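(* Let $\Xi\subseteq\mathbb{R}^d$ be a design space and let $d_{\mathrm{train}}$, $d_{\mathrm{test}}$ be probability densities on $\Xi$ with $d_{\mathrm{train}}(\xi)>0$ for all $\xi\in\Xi$. Let $(\xi,y)$ be distributed with $\xi\sim d_{\mathrm{train}}$ and $y\mid\xi$ drawn from the true data-generating process, and let $f^{\star}(\xi)=\mathbb{E}[y\mid\xi]$ be the true regression function. Let $\mathcal{F}$ be a finite class of functions $\Xi\to\mathbb{R}$, and suppose there is $0<y_{\infty}<\infty$ with $\sup_{f\in\mathcal{F}}\sup_{\xi\in\Xi}|f(\xi)|\le y_\infty$, $\sup_{\xi\in\Xi}|f^{\star}(\xi)|\le y_\infty$ and $|y|\le y_\infty$ almost surely. Let $\bar f=\arg\min_{f\in\mathcal{F}}R_{\mathrm{test}}(f)$, where $R_{\mathrm{test}}(f):=\mathbb{E}_{\xi\sim d_{\mathrm{test}}}[(f(\xi)-f^{\star}(\xi))^2]$. Define $$\mathbb{C}_\infty:=\sup_{\xi\in\Xi}\left|\frac{d_{\mathrm{test}}(\xi)}{d_{\mathrm{train}}(\xi)}\right|,\qquad \mathbb{B}_\infty:=\sup_{\xi\in\Xi}|\bar f(\xi)-f^{\star}(\xi)|.$$ Given $n$ i.i.d. samples $(\xi_i,y_i)_{i=1}^n$ from this training distribution, let $\hat f^{(n)}\in\arg\min_{f\in\mathcal{F}}\frac1n\sum_{i=1}^n(f(\xi_i)-y_i)^2$ be the empirical risk minimizer, and define $$\widehat{\mathbb{A}}(\hat f^{(n)}):=\mathbb{E}_{\xi\sim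 d_{\mathrm{train}}}\big[(\hat f^{(n)}(\xi)-\bar f(\xi))(\bar f(\xi)-f^{\star}(\xi))\big].$$ Then for any $\delta\in(0,1)$, with probability at least $1-\delta$, $$R_{\mathrm{test}}(\hat f^{(n)})\le \mathbb{C}_\infty\cdot\begin{cases}\mathbb{B}_\infty^2+\dfrac{224\,y_\infty^2\log(|\mathcal{F}|/\delta)}{3n}-2\widehat{\mathbb{A}}(\hat f^{(n)}), & \text{if } \widehat{\mathbb{A}}(\hat f^{(n)})<0,\\[2mm] \mathbb{B}_\infty^2+\dfrac{128\,y_\infty^2\log(|\mathcal{F}|/\delta)}{3n}-\sqrt{3}\,\widehat{\mathbb{A}}(\hat f^{(n)}), & \text{if } \widehat{\mathbb{A}}(\hat f^{(n)})\ge 0.\end{cases}$$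
   Context: $d_{\mathrm{train}}$ is the distribution from which training designs are drawn and $d_{\mathrm{test}}$ the distribution on which the predictor is evaluated (covariate shift: the conditional law of $y$ given $\xi$ is the same under both). $|\mathcal{F}|$ is the cardinality of the model class. *)

theory Defs
  imports "HOL-Probability.Probability"
begin

definition prob_density_on :: "'a::euclidean_space set \<Rightarrow> ('a \<Rightarrow> real) \<Rightarrow> bool" where
  "prob_density_on Xi d \<longleftrightarrow> d \<in> borel_measurable borel \<and> (\<forall>x\<in>Xi. 0 \<le> d x) \<and>
     (\<integral>\<^sup>+ x. ennreal (indicator Xi x * d x) \<partial>lborel) = 1"

definition test_risk :: "'a::euclidean_space set \<Rightarrow> ('a \<Rightarrow> real) \<Rightarrow> ('a \<Rightarrow> real) \<Rightarrow> ('a \<Rightarrow> real) \<Rightarrow> real" where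
  "test_risk Xi dtest fstar f = (LINT x:Xi|lborel. dtest x * (f x - fstar x)^2)"

definition emp_risk :: "nat \<Rightarrow> (nat \<Rightarrow> 'a \<times> real) \<Rightarrow> ('a \<Rightarrow> real) \<Rightarrow> real" where
  "emp_risk n S f = (1 / real n) * (\<Sum>i<n. (f (fst (S i)) - snd (S i))^2)"

definition C_inf :: "'a set \<Rightarrow> ('a \<Rightarrow> real) \<Rightarrow> ('a \<Rightarrow> real) \<Rightarrow> real" where
  "C_inf Xi dtrain dtest = (SUP x\<in>Xi. \<bar>dtest x / dtrain x\<bar>)"

definition B_inf :: "'a set \<Rightarrow> ('a \<Rightarrow> real) \<Rightarrow> ('a \<Rightarrow> real) \<Rightarrow> real" where
  "B_inf Xi fbar fstar = (SUP x\<in>Xi. \<bar>fbar x - fstar x\<bar>)"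

definition A_hat :: "'a::euclidean_space set \<Rightarrow> ('a \<Rightarrow> real) \<Rightarrow> ('a \<Rightarrow> real) \<Rightarrow> ('a \<Rightarrow> real) \<Rightarrow> ('a \<Rightarrow> real) \<Rightarrow> real" where
  "A_hat Xi dtrain fbar fstar fh =
     (LINT x:Xi|lborel. dtrain x * ((fh x - fbar x) * (fbar x - fstar x)))"

end

theory Submission
  imports Defs
begin


lemma exp_q_ge1:
  fixes x :: real assumes "x < 3"
  shows "exp x \<le> 1 + x + 3*x^2/(6-2*x)"
proof -
  define f where "f = (\<lambda>x::real. (1 + x + 3*x^2/(6-2*x)) * exp(-x))"
  have der: "DERIV f z :> exp(-z) * (2*z^3/(6-2*z)^2)" if "z < 3" for z
  proof -
    have "DERIV f z :> ((1 + (6*z*(6-2*z) + 3*z^2*2)/(6-2*z)^2) * exp(-z) + (1 + z + 3*z^2/(6-2*z)) * (exp(-z) * (-1)))"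
      unfolding f_def using that
      by (auto intro!: derivative_eq_intros simp: power2_eq_square)
    moreover have "((1 + (6*z*(6-2*z) + 3*z^2*2)/(6-2*z)^2) * exp(-z) + (1 + z + 3*z^2/(6-2*z)) * (exp(-z) * (-1))) = exp(-z) * (2*z^3/(6-2*z)^2)"
    proof -
      have w: "(6-2*z) \<noteq> 0" using that by simp
      show ?thesis using w by (simp add: divide_simps) (simp add: algebra_simps power2_eq_square power3_eq_cube)
    qed
    ultimately show ?thesis by simp
  qed
  have "f 0 \<le> f x"
  proof (cases "0 \<le> x")
    case True
    show ?thesis
    proof (rule DERIV_nonneg_imp_nondecreasing[OF True])
      fix z assume "0 \<le> z" "z \<le> x"
      thus "\<exists>y. DERIV f z :> y \<and> y \<ge> 0" using der[of z] assms by (intro exI[of _ "exp(-z) * (2*z^3/(6-2*z)^2)"]) auto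
    qed
  next
    case False
    show ?thesis
    proof (rule DERIV_nonpos_imp_nonincreasing[of x 0 f])
      show "x \<le> 0" using False by simp
      fix z assume "x \<le> z" "z \<le> 0"
      moreover have "z^3 \<le> 0" using \<open>z \<le> 0\<close> by (simp add: power_le_zero_eq)
      ultimately show "\<exists>y. DERIV f z :> y \<and> y \<le> 0" using der[of z]
        by (intro exI[of _ "exp(-z) * (2*z^3/(6-2*z)^2)"]) (auto intro!: mult_nonneg_nonpos divide_nonpos_nonneg)
    qed
  qed
  hence "1 \<le> (1 + x + 3*x^2/(6-2*x)) * exp(-x)" by (simp add: f_def)
  hence "exp x * 1 \<le> exp x * ((1 + x + 3*x^2/(6-2*x)) * exp(-x))" by simp
  also have "exp x * ((1 + x + 3*x^2/(6-2*x)) * exp(-x)) = 1 + x + 3*x^2/(6-2*x)"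
    by (simp add: exp_minus field_simps)
  finally show ?thesis by simp
qed



lemma lambda_choice:
  fixes v b u :: real
  assumes v: "0 \<le> v" and b: "0 < b" and u: "0 < u"
  defines "t \<equiv> sqrt (2*u* v) + 2*b*u/3"
  shows "\<exists>l. 0 \<le> l \<and> l*b < 3 \<and> - l*t + 3*l^2* v/(6 - 2*l*b) \<le> -u"
proof (cases "v = 0")
  case True
  show ?thesis
    by (rule exI[of _ "3/(2*b)"]) (use b True in \<open>simp add: t_def field_simps\<close>)
next
  case False
  hence vp: "0 < v" using v by simp
  have tp: "0 < t" unfolding t_def using b u v by (simp add: add_nonneg_pos)
  define D where "D = v + b*t/3"
  have Dp: "0 < D" unfolding D_def using vp b tp by (simp add: add_pos_pos)
  define l where "l = t / D"
  have lb: "l*b < 3"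
  proof -
    have "l*b = t*b/D" unfolding l_def by simp
    also have "\<dots> < 3" using Dp vp by (simp add: D_def divide_less_eq)
    finally show ?thesis .
  qed
  have e1: "6 - 2*l*b = 6* v/D" unfolding l_def using Dp by (simp add: D_def field_simps)
  have e2: "- l*t + 3*l^2* v/(6 - 2*l*b) = -((t^2)/(2*D))"
    unfolding e1 unfolding l_def using Dp vp by (simp add: field_simps power2_eq_square)
  have s: "sqrt (2*u* v)^2 = 2*u* v" using u v by simp
  have "t^2 \<ge> 2*u*D"
    unfolding D_def t_def using s b u v
    by (simp add: power2_eq_square algebra_simps)
  hence "t^2/(2*D) \<ge> u" using Dp by (simp add: field_simps)
  thus ?thesis using lb tp Dp e2 by (intro exI[of _ l]) (simp add: l_def)
qed



lemma exp_bern: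
  fixes x c :: real assumes "x \<le> c" "c < 3"
  shows "exp x \<le> 1 + x + 3*x^2/(6-2*c)"
proof -
  have "exp x \<le> 1 + x + 3*x^2/(6-2*x)" by (rule exp_q_ge1) (use assms in auto)
  also have "3*x^2/(6-2*x) \<le> 3*x^2/(6-2*c)"
    using assms by (intro divide_left_mono) (auto intro!: mult_pos_pos)
  finally show ?thesis by simp
qed

lemma bernstein_prod:
  fixes P :: "'a measure" and W :: "'a \<Rightarrow> real"
  assumes P: "prob_space P" and Wm: "W \<in> borel_measurable P"
    and Wb: "\<And>z. z \<in> space P \<Longrightarrow> W z \<le> b"
    and WK: "\<And>z. z \<in> space P \<Longrightarrow> \<bar>W z\<bar> \<le> K"
    and W0: "(\<integral>z. W z \<partial>P) = 0"
    and Wv: "(\<integral>z. (W z)^2 \<partial>P) \<le> v"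
    and v: "0 \<le> v" and b: "0 < b" and u: "0 < u"
  shows "measure (PiM {..<n} (\<lambda>_. P))
           {S\<in>space (PiM {..<n} (\<lambda>_. P)). (\<Sum>i<n. W (S i)) \<ge> real n * (sqrt(2*u* v) + 2*b*u/3)}
         \<le> exp (- real n * u)"
proof -
  interpret P: prob_space P by (rule P)
  interpret PP: product_prob_space "\<lambda>_. P" "{..<n}" by unfold_locales
  define t where "t = sqrt(2*u* v) + 2*b*u/3"
  obtain l where l0: "0 \<le> l" and lb: "l*b < 3" and le: "- l*t + 3*l^2* v/(6 - 2*l*b) \<le> -u"
    using lambda_choice[OF v b u] unfolding t_def by blast
  let ?Q = "PiM {..<n} (\<lambda>_. P)"
  have intW: "integrable P W" by (rule P.integrable_const_bound[of _ K]) (use WK Wm in auto)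
  have intW2: "integrable P (\<lambda>z. (W z)^2)"
  proof (rule P.integrable_const_bound[of _ "K^2"])
    show "AE x in P. norm ((W x)^2) \<le> K^2"
    proof (rule AE_I2)
      fix x assume "x \<in> space P"
      hence "\<bar>W x\<bar> \<le> K" by (rule WK)
      hence "\<bar>W x\<bar>^2 \<le> K^2" by (intro power_mono) auto
      thus "norm ((W x)^2) \<le> K^2" by simp
    qed
  qed (use Wm in auto)
  have intE: "integrable P (\<lambda>z. exp (l * W z))"
    by (rule P.integrable_const_bound[of _ "exp (l*K)"]) (use WK Wm l0 in \<open>auto intro!: mult_left_mono simp: abs_le_iff\<close>)
  have mgf: "(\<integral>z. exp (l * W z) \<partial>P) \<le> exp (3*l^2* v/(6 - 2*l*b))"
  proof -
    have "(\<integral>z. exp (l * W z) \<partial>P) \<le> (\<integral>z. 1 + l * W z + 3*(l * W z)^2/(6-2*(l*b)) \<partial>P)"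
    proof (rule integral_mono[OF intE])
      show "integrable P (\<lambda>z. 1 + l * W z + 3*(l * W z)^2/(6-2*(l*b)))"
        using intW intW2 by (auto simp: power_mult_distrib)
      fix z assume "z \<in> space P"
      thus "exp (l * W z) \<le> 1 + l * W z + 3*(l * W z)^2/(6-2*(l*b))"
        using Wb l0 lb by (intro exp_bern) (auto intro: mult_left_mono)
    qed
    also have "\<dots> = 1 + l * (\<integral>z. W z \<partial>P) + 3*l^2/(6-2*(l*b)) * (\<integral>z. (W z)^2 \<partial>P)"
      using intW intW2 by (simp add: power_mult_distrib P.prob_space)
    also have "\<dots> \<le> 1 + 3*l^2* v/(6 - 2*l*b)"
      using W0 Wv lb by (auto intro!: mult_left_mono divide_right_mono simp: mult.assoc mult.commute[of b l])
    also have "\<dots> \<le> exp (3*l^2* v/(6 - 2*l*b))" by (rule exp_ge_add_one_self)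
    finally show ?thesis .
  qed
  let ?A = "{S\<in>space ?Q. (\<Sum>i<n. W (S i)) \<ge> real n * t}"
  have Am: "?A \<in> sets ?Q" using Wm by measurable
  have "measure ?Q ?A = (\<integral>S. indicator ?A S \<partial>?Q)" using Am by simp
  also have "\<dots> \<le> (\<integral>S. exp (- l * (real n * t)) * (\<Prod>i<n. exp (l * W (S i))) \<partial>?Q)"
  proof (rule integral_mono)
    show "integrable ?Q (indicator ?A :: _ \<Rightarrow> real)" using Am by (intro integrable_real_indicator) (auto simp: less_top[symmetric])
    show "integrable ?Q (\<lambda>S. exp (- l * (real n * t)) * (\<Prod>i<n. exp (l * W (S i))))"
      using PP.product_integrable_prod[of "{..<n}" "\<lambda>_ z. exp (l * W z)"] intE by auto
    fix S assume S: "S \<in> space ?Q"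
    have eq: "exp (- l * (real n * t)) * (\<Prod>i<n. exp (l * W (S i))) = exp (l * ((\<Sum>i<n. W (S i)) - real n * t))"
      by (simp add: exp_sum[symmetric] sum_distrib_left algebra_simps exp_add[symmetric])
    show "indicator ?A S \<le> exp (- l * (real n * t)) * (\<Prod>i<n. exp (l * W (S i)))"
      unfolding eq using S l0 by (auto simp: indicator_def)
  qed
  also have "\<dots> = exp (- l * (real n * t)) * (\<Prod>i<n. (\<integral>z. exp (l * W z) \<partial>P))"
    using PP.product_integral_prod[of "{..<n}" "\<lambda>_ z. exp (l * W z)"] intE by simp
  also have "\<dots> \<le> exp (- l * (real n * t)) * (\<Prod>i<n. exp (3*l^2* v/(6 - 2*l*b)))"
    by (intro mult_left_mono prod_mono) (use mgf in auto)
  also have "\<dots> = exp (real n * (- l*t + 3*l^2* v/(6 - 2*l*b)))"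
    by (simp add: exp_of_nat_mult[symmetric] exp_add[symmetric] algebra_simps)
  also have "\<dots> \<le> exp (- real n * u)"
  proof -
    have "real n * (- l*t + 3*l^2* v/(6 - 2*l*b)) \<le> real n * (-u)"
      using le by (intro mult_left_mono) auto
    thus ?thesis by simp
  qed
  finally show ?thesis unfolding t_def .
qed



lemma alg_pos:
  fixes a D A r q :: real
  assumes a: "0 < a" and D: "0 \<le> D" and r2: "r^2 = 3" and r: "0 < r" and A: "0 \<le> A"
    and q: "q = sqrt (32 * a * D)"
    and h: "D + 2*A < q + 16*a/3"
  shows "D + (2+r)*A \<le> 128*a/3"
proof -
  have q0: "0 \<le> q" using q a D by simp
  have qq: "q^2 = 32*a*D" using q a D by simp
  have r_le: "r \<le> 16/9"
  proof (rule ccontr)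
    assume "\<not> r \<le> 16/9" hence "16/9 < r" by simp
    hence "(16/9)^2 < r^2" by (intro power_strict_mono) auto
    thus False using r2 by (simp add: power2_eq_square)
  qed
  have step2: "D + (2+r)*A \<le> D + (1+r/2)*(q + 16*a/3 - D)"
  proof -
    have "(1+r/2)*(2*A) \<le> (1+r/2)*(q + 16*a/3 - D)"
      using h r by (intro mult_left_mono) auto
    thus ?thesis by (simp add: algebra_simps)
  qed
  have sq: "0 \<le> 3*(q - 32*a*(r+3/2)/3)^2" by simp
  have ident: "3*(q - 32*a*(r+3/2)/3)^2 = 3*q^2 - 64*a*(r+3/2)*q + 64*a^2*(28+16*r)"
    using r2 by (simp add: power2_eq_square algebra_simps)
  have "64*a*(r+3/2)*q \<le> 3*q^2 + 64*a^2*(28+16*r)" using sq ident by linarith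
  hence "64*a*((r+3/2)*q) \<le> 64*a*((3/2)*D + a*(28+16*r))"
    using qq by (simp add: algebra_simps power2_eq_square)
  hence k1: "(r+3/2)*q \<le> (3/2)*D + a*(28+16*r)" using a by simp
  have k2: "r*((1+r/2)*q) \<le> r*((r/2)*D + a*(28*r/3 + 16))"
  proof -
    have "r*((1+r/2)*q) = (r + r^2/2)*q" by (simp add: algebra_simps power2_eq_square)
    also have "\<dots> = (r+3/2)*q" using r2 by simp
    also have "\<dots> \<le> (3/2)*D + a*(28+16*r)" by (rule k1)
    also have "\<dots> = r*((r/2)*D + a*(28*r/3 + 16))" using r2 by (simp add: algebra_simps power2_eq_square)
    finally show ?thesis .
  qed
  hence k3: "(1+r/2)*q \<le> (r/2)*D + a*(28*r/3 + 16)" using r by simp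
  have "D + (1+r/2)*(q + 16*a/3 - D) = -(r/2)*D + (1+r/2)*q + (1+r/2)*16*a/3"
    by (simp add: algebra_simps)
  also have "\<dots> \<le> a*(28*r/3 + 16) + (1+r/2)*16*a/3" using k3 by linarith
  also have "\<dots> = a*(12*r + 16 + 16/3)" by (simp add: field_simps)
  also have "\<dots> \<le> a*(12*(16/9) + 16 + 16/3)" using r_le a by (intro mult_left_mono) auto
  also have "\<dots> = 128*a/3" by simp
  finally show ?thesis using step2 by linarith
qed

lemma alg_neg:
  fixes a D A q :: real
  assumes a: "0 < a" and D: "0 \<le> D"
    and q: "q = sqrt (32 * a * D)"
    and h: "D + 2*A < q + 16*a/3"
  shows "D + 4*A \<le> 224*a/3"
proof -
  have qq: "q^2 = 32*a*D" using q a D by simp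
  have "0 \<le> (q - 32*a)^2" by simp
  hence "64*a*q \<le> q^2 + 1024*a^2" by (simp add: power2_eq_square algebra_simps)
  hence "64*a*q \<le> 64*a*(D/2 + 16*a)" using qq by (simp add: algebra_simps power2_eq_square)
  hence "q \<le> D/2 + 16*a" using a by simp
  thus ?thesis using h a by linarith
qed

lemma dens_integrable:
  fixes Xi :: "'a::euclidean_space set" and d \<psi> :: "'a \<Rightarrow> real"
  assumes Xi: "Xi \<in> sets borel" and d: "prob_density_on Xi d" and \<psi>[measurable]: "\<psi> \<in> borel_measurable borel"
    and bd: "\<And>x. x \<in> Xi \<Longrightarrow> \<bar>\<psi> x\<bar> \<le> K"
  shows "integrable lborel (\<lambda>x. indicator Xi x * d x * \<psi> x)"
proof -
  have dm[measurable]: "d \<in> borel_measurable borel" using d by (simp add: prob_density_on_def)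
  have int1: "integrable lborel (\<lambda>x. indicator Xi x * d x)"
  proof (rule integrableI_nonneg)
    show "(\<lambda>x. indicator Xi x * d x) \<in> borel_measurable lborel" using Xi by measurable
    show "AE x in lborel. 0 \<le> indicator Xi x * d x" using d by (auto simp: prob_density_on_def indicator_def)
    show "(\<integral>\<^sup>+ x. ennreal (indicator Xi x * d x) \<partial>lborel) < \<infinity>" using d by (simp add: prob_density_on_def)
  qed
  show ?thesis
  proof (rule Bochner_Integration.integrable_bound[OF integrable_mult_right[OF int1, of K]])
    show "(\<lambda>x. indicator Xi x * d x * \<psi> x) \<in> borel_measurable lborel" using Xi by measurable
    show "AE x in lborel. norm (indicator Xi x * d x * \<psi> x) \<le> norm (K * (indicator Xi x * d x))"
    proof (rule AE_I2)
      fix x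
      show "norm (indicator Xi x * d x * \<psi> x) \<le> norm (K * (indicator Xi x * d x))"
      proof (cases "x \<in> Xi")
        case True
        have "0 \<le> d x" using d True by (simp add: prob_density_on_def)
        moreover have "\<bar>\<psi> x\<bar> \<le> K" using bd True by simp
        ultimately have "d x * \<bar>\<psi> x\<bar> \<le> d x * K" by (intro mult_left_mono)
        also have "\<dots> \<le> \<bar>K\<bar> * \<bar>d x\<bar>" using \<open>0 \<le> d x\<close> by (simp add: mult.commute mult_right_mono)
        finally show ?thesis using True \<open>0 \<le> d x\<close> by (simp add: abs_mult)
      qed simp
    qed
  qed
qed

lemma absprod: fixes x y X Y :: real shows "\<bar>x\<bar> \<le> X \<Longrightarrow> \<bar>y\<bar> \<le> Y \<Longrightarrow> \<bar>x*y\<bar> \<le> X*Y"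
  by (simp add: abs_mult mult_mono)

lemma abssq: fixes x X :: real shows "\<bar>x\<bar> \<le> X \<Longrightarrow> \<bar>x^2\<bar> \<le> X^2"
  by (metis abs_ge_zero abs_power2 power2_abs power_mono)

theorem theorem1:
  fixes Xi :: "'a::euclidean_space set"
    and dtrain dtest fstar fbar :: "'a \<Rightarrow> real"
    and P :: "('a \<times> real) measure"
    and F :: "('a \<Rightarrow> real) set"
    and yinf \<delta> :: real and n :: nat
  assumes Xi: "Xi \<in> sets lborel"
    and dtrain: "prob_density_on Xi dtrain" and dtrain_pos: "\<forall>x\<in>Xi. 0 < dtrain x"
    and dtest: "prob_density_on Xi dtest"
    and P_prob: "prob_space P" and P_sets: "sets P = sets (borel \<Otimes>\<^sub>M borel)"
    and P_marg: "distr P borel fst = density lborel (\<lambda>x. ennreal (indicator Xi x * dtrain x))"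
    and fstar_meas: "fstar \<in> borel_measurable borel"
    and fstar_condexp: "\<forall>A\<in>sets borel. A \<subseteq> Xi \<longrightarrow>
          (\<integral>z. indicator A (fst z) * snd z \<partial>P) = (\<integral>x. indicator A x * dtrain x * fstar x \<partial>lborel)"
    and F_fin: "finite F" and F_ne: "F \<noteq> {}"
    and F_meas: "\<forall>f\<in>F. f \<in> borel_measurable borel"
    and yinf_pos: "0 < yinf"
    and F_bdd: "\<forall>f\<in>F. \<forall>x\<in>Xi. \<bar>f x\<bar> \<le> yinf"
    and fstar_bdd: "\<forall>x\<in>Xi. \<bar>fstar x\<bar> \<le> yinf"
    and y_bdd: "AE z in P. \<bar>snd z\<bar> \<le> yinf"
    and fbar: "fbar \<in> F" "\<forall>f\<in>F. test_risk Xi dtest fstar fbar \<le> test_risk Xi dtest fstar f"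
    and C_fin: "bdd_above ((\<lambda>x. \<bar>dtest x / dtrain x\<bar>) ` Xi)"
    and n_pos: "0 < n"
    and \<delta>: "0 < \<delta>" "\<delta> < 1"
  shows "\<exists>E\<in>sets (PiM {..<n} (\<lambda>_. P)). measure (PiM {..<n} (\<lambda>_. P)) E \<ge> 1 - \<delta> \<and>
     (\<forall>S\<in>E. \<forall>fh\<in>F. (\<forall>f\<in>F. emp_risk n S fh \<le> emp_risk n S f) \<longrightarrow>
        test_risk Xi dtest fstar fh \<le> C_inf Xi dtrain dtest *
          (if A_hat Xi dtrain fbar fstar fh < 0
           then (B_inf Xi fbar fstar)^2 + 224 * yinf^2 * ln (real (card F) / \<delta>) / (3 * real n)
                - 2 * A_hat Xi dtrain fbar fstar fh
           else (B_inf Xi fbar fstar)^2 + 128 * yinf^2 * ln (real (card F) / \<delta>) / (3 * real n)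
                - sqrt 3 * A_hat Xi dtrain fbar fstar fh))"
proof -
  interpret P: prob_space P by (rule P_prob)
  have y0[simp]: "0 \<le> yinf" using yinf_pos by simp
  have mP: "\<And>N. measurable P N = measurable (borel \<Otimes>\<^sub>M borel) N"
    by (rule measurable_cong_sets[OF P_sets refl])
  have spP: "space P = UNIV" using sets_eq_imp_space_eq[OF P_sets] by (simp add: space_pair_measure)
  have Xi_b[measurable]: "Xi \<in> sets borel" using Xi by simp
  have dtr_m[measurable]: "dtrain \<in> borel_measurable borel" using dtrain by (simp add: prob_density_on_def)
  have dte_m[measurable]: "dtest \<in> borel_measurable borel" using dtest by (simp add: prob_density_on_def)
  have dtr_nn: "\<And>x. x \<in> Xi \<Longrightarrow> 0 \<le> dtrain x" using dtrain by (simp add: prob_density_on_def)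
  have dte_nn: "\<And>x. x \<in> Xi \<Longrightarrow> 0 \<le> dtest x" using dtest by (simp add: prob_density_on_def)
  have F_m: "\<And>f. f \<in> F \<Longrightarrow> f \<in> borel_measurable borel" using F_meas by auto
  note fstar_meas[measurable]
  define Good where "Good = Xi \<times> {-yinf..yinf}"
  have Good_m[measurable]: "Good \<in> sets (borel \<Otimes>\<^sub>M borel)" unfolding Good_def by (intro pair_measureI) auto
  have Good_P: "Good \<in> sets P" using Good_m P_sets by simp
  have fst_m: "fst \<in> measurable P borel" unfolding mP by measurable
  have AE_Xi: "AE z in P. fst z \<in> Xi"
  proof -
    have "AE x in distr P borel fst. x \<in> Xi"
      unfolding P_marg by (subst AE_density) (auto intro!: AE_I2 simp: indicator_def split: if_splits)
    thus ?thesis by (subst (asm) AE_distr_iff[OF fst_m]) auto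
  qed
  have AE_Good: "AE z in P. z \<in> Good"
    using AE_Xi y_bdd by eventually_elim (auto simp: Good_def abs_le_iff)
  have T: "(\<integral>z. \<psi> (fst z) \<partial>P) = (\<integral>x. indicator Xi x * dtrain x * \<psi> x \<partial>lborel)"
    if [measurable]: "\<psi> \<in> borel_measurable borel" for \<psi> :: "'a \<Rightarrow> real"
  proof -
    have "(\<integral>z. \<psi> (fst z) \<partial>P) = (\<integral>x. \<psi> x \<partial>distr P borel fst)"
      by (rule integral_distr[symmetric, OF fst_m]) simp
    also have "\<dots> = (\<integral>x. \<psi> x \<partial>density lborel (\<lambda>x. ennreal (indicator Xi x * dtrain x)))"
      by (simp add: P_marg)
    also have "\<dots> = (\<integral>x. (indicator Xi x * dtrain x) *\<^sub>R \<psi> x \<partial>lborel)"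
      by (rule integral_density) (auto intro!: AE_I2 simp: indicator_def dtr_nn)
    finally show ?thesis by simp
  qed
  have GoodE: "\<And>z. z \<in> Good \<Longrightarrow> fst z \<in> Xi \<and> \<bar>snd z\<bar> \<le> yinf"
    by (auto simp: Good_def abs_le_iff)
  have fsG: "\<And>z. z \<in> Good \<Longrightarrow> \<bar>fstar (fst z)\<bar> \<le> yinf" using GoodE fstar_bdd by blast
  have fG: "\<And>f z. f \<in> F \<Longrightarrow> z \<in> Good \<Longrightarrow> \<bar>f (fst z)\<bar> \<le> yinf" using GoodE F_bdd by blast
  have K: "(\<integral>z. indicator Good z * snd z * \<phi> (fst z) \<partial>P) = (\<integral>z. indicator Good z * fstar (fst z) * \<phi> (fst z) \<partial>P)"
    if [measurable]: "\<phi> \<in> borel_measurable borel" and K0: "0 \<le> K" and Kb: "\<And>x. x \<in> Xi \<Longrightarrow> \<bar>\<phi> x\<bar> \<le> K" 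
    for \<phi> :: "'a \<Rightarrow> real" and K
  proof -
    define w1 where "w1 = (\<lambda>z. indicator Good z * (snd z + yinf))"
    define w2 where "w2 = (\<lambda>z. indicator Good z * (fstar (fst z) + yinf))"
    have w1m[measurable]: "w1 \<in> borel_measurable P" unfolding mP w1_def by measurable
    have w2m[measurable]: "w2 \<in> borel_measurable P" unfolding mP w2_def by measurable
    have w1nn: "0 \<le> w1 z" for z using GoodE[of z] by (auto simp: w1_def indicator_def abs_le_iff)
    have w2nn: "0 \<le> w2 z" for z using GoodE[of z] fsG[of z] by (auto simp: w2_def indicator_def abs_le_iff)
    have w1b: "\<bar>w1 z\<bar> \<le> 2*yinf" for z using GoodE[of z] yinf_pos by (auto simp: w1_def indicator_def abs_le_iff)
    have w2b: "\<bar>w2 z\<bar> \<le> 2*yinf" for z using GoodE[of z] fsG[of z] yinf_pos by (auto simp: w2_def indicator_def abs_le_iff)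
    have core: "(\<integral>z. indicator A (fst z) * indicator Good z * snd z \<partial>P) = (\<integral>z. indicator A (fst z) * indicator Good z * fstar (fst z) \<partial>P)"
      if A[measurable]: "A \<in> sets borel" for A
    proof -
      have "(\<integral>z. indicator A (fst z) * indicator Good z * snd z \<partial>P) = (\<integral>z. indicator (A \<inter> Xi) (fst z) * snd z \<partial>P)"
      proof (rule integral_cong_AE)
        show "(\<lambda>z. indicator A (fst z) * indicator Good z * snd z) \<in> borel_measurable P" unfolding mP by measurable
        show "(\<lambda>z. indicator (A \<inter> Xi) (fst z) * snd z) \<in> borel_measurable P" unfolding mP by measurable
        show "AE z in P. indicator A (fst z) * indicator Good z * snd z = indicator (A \<inter> Xi) (fst z) * snd z"
          using AE_Good by eventually_elim (auto simp: indicator_def dest: GoodE)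
      qed
      also have "\<dots> = (\<integral>x. indicator (A \<inter> Xi) x * dtrain x * fstar x \<partial>lborel)"
        using fstar_condexp A by auto
      also have "\<dots> = (\<integral>x. indicator Xi x * dtrain x * (indicator A x * fstar x) \<partial>lborel)"
        by (rule Bochner_Integration.integral_cong) (auto simp: indicator_def)
      also have "\<dots> = (\<integral>z. indicator A (fst z) * fstar (fst z) \<partial>P)"
        by (rule T[symmetric]) measurable
      also have "\<dots> = (\<integral>z. indicator A (fst z) * indicator Good z * fstar (fst z) \<partial>P)"
      proof (rule integral_cong_AE)
        show "(\<lambda>z. indicator A (fst z) * indicator Good z * fstar (fst z)) \<in> borel_measurable P" unfolding mP by measurable
        show "(\<lambda>z. indicator A (fst z) * fstar (fst z)) \<in> borel_measurable P" unfolding mP by measurable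
        show "AE z in P. indicator A (fst z) * fstar (fst z) = indicator A (fst z) * indicator Good z * fstar (fst z)"
          using AE_Good by eventually_elim (auto simp: indicator_def dest: GoodE)
      qed
      finally show ?thesis .
    qed
    have intP: "integrable P h" if "h \<in> borel_measurable P" "\<And>z. \<bar>h z\<bar> \<le> B" for h :: "_ \<Rightarrow> real" and B
      by (rule P.integrable_const_bound[of _ B]) (use that in auto)
    have Aeq: "(\<integral>z. indicator A (fst z) * w1 z \<partial>P) = (\<integral>z. indicator A (fst z) * w2 z \<partial>P)"
      if A[measurable]: "A \<in> sets borel" for A
    proof -
      have i1: "integrable P (\<lambda>z. indicator A (fst z) * indicator Good z * snd z)"
        by (rule intP[of _ yinf]) (unfold mP, measurable, auto simp: indicator_def dest: GoodE)
      have i2: "integrable P (\<lambda>z. indicator A (fst z) * indicator Good z * fstar (fst z))"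
        by (rule intP[of _ yinf]) (unfold mP, measurable, auto simp: indicator_def dest: GoodE intro: fstar_bdd[rule_format])
      have i3: "integrable P (\<lambda>z. indicator A (fst z) * indicator Good z * yinf)"
        by (rule intP[of _ yinf]) (unfold mP, measurable, use yinf_pos in \<open>auto simp: indicator_def\<close>)
      have "(\<integral>z. indicator A (fst z) * w1 z \<partial>P) = (\<integral>z. indicator A (fst z) * indicator Good z * snd z + indicator A (fst z) * indicator Good z * yinf \<partial>P)"
        by (simp add: w1_def algebra_simps)
      also have "\<dots> = (\<integral>z. indicator A (fst z) * indicator Good z * snd z \<partial>P) + (\<integral>z. indicator A (fst z) * indicator Good z * yinf \<partial>P)"
        using i1 i3 by (rule Bochner_Integration.integral_add)
      also have "\<dots> = (\<integral>z. indicator A (fst z) * indicator Good z * fstar (fst z) \<partial>P) + (\<integral>z. indicator A (fst z) * indicator Good z * yinf \<partial>P)"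
        using core[OF A] by simp
      also have "\<dots> = (\<integral>z. indicator A (fst z) * indicator Good z * fstar (fst z) + indicator A (fst z) * indicator Good z * yinf \<partial>P)"
        using i2 i3 by (rule Bochner_Integration.integral_add[symmetric])
      also have "\<dots> = (\<integral>z. indicator A (fst z) * w2 z \<partial>P)"
        by (simp add: w2_def algebra_simps)
      finally show ?thesis .
    qed
    define mu1 where "mu1 = distr (density P (\<lambda>z. ennreal (w1 z))) borel fst"
    define mu2 where "mu2 = distr (density P (\<lambda>z. ennreal (w2 z))) borel fst"
    have fst_m': "fst \<in> measurable (density P (\<lambda>z. ennreal (w z))) borel" for w
      using fst_m by simp
    have em: "emeasure (distr (density P (\<lambda>z. ennreal (w z))) borel fst) A = ennreal (\<integral>z. indicator A (fst z) * w z \<partial>P)"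
      if A[measurable]: "A \<in> sets borel" and wm[measurable]: "w \<in> borel_measurable P" and wnn: "\<And>z. 0 \<le> w z"
        and wb: "\<And>z. \<bar>w z\<bar> \<le> 2*yinf" for A w
    proof -
      have "emeasure (distr (density P (\<lambda>z. ennreal (w z))) borel fst) A
          = emeasure (density P (\<lambda>z. ennreal (w z))) (fst -` A \<inter> space P)"
        by (subst emeasure_distr[OF fst_m' A]) simp
      also have "\<dots> = (\<integral>\<^sup>+z. ennreal (w z) * indicator (fst -` A \<inter> space P) z \<partial>P)"
        by (rule emeasure_density) (use fst_m A in \<open>auto simp: measurable_def\<close>)
      also have "\<dots> = (\<integral>\<^sup>+z. ennreal (indicator A (fst z) * w z) \<partial>P)"
        by (rule nn_integral_cong) (auto simp: spP indicator_def)
      also have "\<dots> = ennreal (\<integral>z. indicator A (fst z) * w z \<partial>P)"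
      proof (rule nn_integral_eq_integral)
        show "integrable P (\<lambda>z. indicator A (fst z) * w z)"
          by (rule intP[of _ "2*yinf"]) (use fst_m wb in \<open>auto simp: indicator_def\<close>)
        show "AE z in P. 0 \<le> indicator A (fst z) * w z" using wnn by auto
      qed
      finally show ?thesis .
    qed
    have mu_eq: "mu1 = mu2"
    proof (rule measure_eqI)
      show "sets mu1 = sets mu2" by (simp add: mu1_def mu2_def)
      fix A assume "A \<in> sets mu1"
      hence A: "A \<in> sets borel" by (simp add: mu1_def)
      show "emeasure mu1 A = emeasure mu2 A"
        unfolding mu1_def mu2_def using em[OF A w1m w1nn w1b] em[OF A w2m w2nn w2b] Aeq[OF A] by simp
    qed
    have ii: "(\<integral>x. \<phi> x \<partial>distr (density P (\<lambda>z. ennreal (w z))) borel fst) = (\<integral>z. w z * \<phi> (fst z) \<partial>P)"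
      if wm[measurable]: "w \<in> borel_measurable P" and wnn: "\<And>z. 0 \<le> w z" for w
    proof -
      have "(\<integral>x. \<phi> x \<partial>distr (density P (\<lambda>z. ennreal (w z))) borel fst) = (\<integral>z. \<phi> (fst z) \<partial>density P (\<lambda>z. ennreal (w z)))"
        by (rule integral_distr[OF fst_m']) simp
      also have "\<dots> = (\<integral>z. w z *\<^sub>R \<phi> (fst z) \<partial>P)"
        by (rule integral_density) (use fst_m wnn in auto)
      finally show ?thesis by simp
    qed
    have E: "(\<integral>z. w1 z * \<phi> (fst z) \<partial>P) = (\<integral>z. w2 z * \<phi> (fst z) \<partial>P)"
      using ii[OF w1m w1nn] ii[OF w2m w2nn] mu_eq by (simp add: mu1_def mu2_def)
    have j1: "integrable P (\<lambda>z. indicator Good z * snd z * \<phi> (fst z))"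
      by (rule intP[of _ "yinf*K"]) (unfold mP, measurable, use K0 in \<open>auto simp: indicator_def abs_mult dest!: GoodE intro!: mult_mono Kb\<close>)
    have j2: "integrable P (\<lambda>z. indicator Good z * fstar (fst z) * \<phi> (fst z))"
      by (rule intP[of _ "yinf*K"]) (unfold mP, measurable, use K0 fsG in \<open>auto simp: indicator_def abs_mult intro!: mult_mono Kb dest: GoodE\<close>)
    have j3: "integrable P (\<lambda>z. indicator Good z * yinf * \<phi> (fst z))"
      by (rule intP[of _ "yinf*K"]) (unfold mP, measurable, use K0 in \<open>auto simp: indicator_def abs_mult dest!: GoodE intro!: mult_mono Kb\<close>)
    have "(\<integral>z. indicator Good z * snd z * \<phi> (fst z) \<partial>P) + (\<integral>z. indicator Good z * yinf * \<phi> (fst z) \<partial>P)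
        = (\<integral>z. w1 z * \<phi> (fst z) \<partial>P)"
      by (subst Bochner_Integration.integral_add[OF j1 j3, symmetric]) (simp add: w1_def algebra_simps)
    also have "\<dots> = (\<integral>z. w2 z * \<phi> (fst z) \<partial>P)" by (rule E)
    also have "\<dots> = (\<integral>z. indicator Good z * fstar (fst z) * \<phi> (fst z) \<partial>P) + (\<integral>z. indicator Good z * yinf * \<phi> (fst z) \<partial>P)"
      by (subst Bochner_Integration.integral_add[OF j2 j3, symmetric]) (simp add: w2_def algebra_simps)
    finally show ?thesis by simp
  qed
  have intP: "integrable P h" if "h \<in> borel_measurable P" "\<And>z. \<bar>h z\<bar> \<le> B" for h :: "_ \<Rightarrow> real" and B
    by (rule P.integrable_const_bound[of _ B]) (use that in auto)
  note fbm[measurable] = F_m[OF fbar(1)]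
  have TG: "(\<integral>z. indicator Good z * \<psi> (fst z) \<partial>P) = (\<integral>x. indicator Xi x * dtrain x * \<psi> x \<partial>lborel)"
    if [measurable]: "\<psi> \<in> borel_measurable borel" for \<psi> :: "'a \<Rightarrow> real"
  proof -
    have "(\<integral>z. indicator Good z * \<psi> (fst z) \<partial>P) = (\<integral>z. \<psi> (fst z) \<partial>P)"
    proof (rule integral_cong_AE)
      show "(\<lambda>z. indicator Good z * \<psi> (fst z)) \<in> borel_measurable P" unfolding mP by measurable
      show "(\<lambda>z. \<psi> (fst z)) \<in> borel_measurable P" unfolding mP by measurable
      show "AE z in P. indicator Good z * \<psi> (fst z) = \<psi> (fst z)"
        using AE_Good by eventually_elim auto
    qed
    also have "\<dots> = (\<integral>x. indicator Xi x * dtrain x * \<psi> x \<partial>lborel)" by (rule T) simp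
    finally show ?thesis .
  qed
  have setI: "(LINT x:Xi|lborel. dtrain x * \<psi> x) = (\<integral>x. indicator Xi x * dtrain x * \<psi> x \<partial>lborel)" for \<psi>
    unfolding set_lebesgue_integral_def by (simp add: mult.assoc)
  define Z where "Z = (\<lambda>f z. (f (fst z) - snd z)^2 - (fbar (fst z) - snd z)^2)"
  define EZ where "EZ = (\<lambda>f. \<integral>z. indicator Good z * Z f z \<partial>P)"
  define Dd where "Dd = (\<lambda>f. \<integral>z. indicator Good z * (f (fst z) - fbar (fst z))^2 \<partial>P)"
  define Aa where "Aa = (\<lambda>f. \<integral>z. indicator Good z * ((f (fst z) - fbar (fst z)) * (fbar (fst z) - fstar (fst z))) \<partial>P)"
  define Rtr where "Rtr = (\<lambda>f. \<integral>z. indicator Good z * (f (fst z) - fstar (fst z))^2 \<partial>P)"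
  have intG: "integrable P (\<lambda>z. indicator Good z * q z)"
    if "q \<in> borel_measurable P" "\<And>z. z \<in> Good \<Longrightarrow> \<bar>q z\<bar> \<le> B" for q :: "_ \<Rightarrow> real" and B
  proof (rule intP[of _ "\<bar>B\<bar>"])
    show "(\<lambda>z. indicator Good z * q z) \<in> borel_measurable P" using that(1) Good_P by measurable
    fix z show "\<bar>indicator Good z * q z\<bar> \<le> \<bar>B\<bar>" using that(2)[of z] by (auto simp: indicator_def)
  qed
  have d2: "\<bar>a - b\<bar> \<le> 2*yinf" if "\<bar>a\<bar> \<le> yinf" "\<bar>b\<bar> \<le> yinf" for a b :: real using that by linarith
  have d4: "\<bar>a + b - 2*c\<bar> \<le> 4*yinf" if "\<bar>a\<bar> \<le> yinf" "\<bar>b\<bar> \<le> yinf" "\<bar>c\<bar> \<le> yinf" for a b c :: real using that by linarith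
  have sG: "\<And>z. z \<in> Good \<Longrightarrow> \<bar>snd z\<bar> \<le> yinf" using GoodE by blast
  have EZ_eq: "EZ f = Dd f + 2 * Aa f" if hf: "f \<in> F" for f
  proof -
    note fm[measurable] = F_m[OF hf]
    let ?g = "\<lambda>z. f (fst z) - fbar (fst z)"
    have gb: "\<bar>f x - fbar x\<bar> \<le> 2*yinf" if "x \<in> Xi" for x
      using F_bdd hf fbar(1) that by (smt (verit))
    have i1: "integrable P (\<lambda>z. indicator Good z * (?g z)^2)"
      by (rule intG, unfold mP, measurable) (rule abssq, rule d2, erule fG[OF hf], erule fG[OF fbar(1)])
    have i2: "integrable P (\<lambda>z. indicator Good z * (?g z * (fbar (fst z) - fstar (fst z))))"
      by (rule intG, unfold mP, measurable) (rule absprod, (rule d2, erule fG[OF hf], erule fG[OF fbar(1)]), (rule d2, erule fG[OF fbar(1)], erule fsG))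
    have i3: "integrable P (\<lambda>z. indicator Good z * (snd z * ?g z))"
      by (rule intG, unfold mP, measurable) (rule absprod, erule sG, rule d2, erule fG[OF hf], erule fG[OF fbar(1)])
    have i4: "integrable P (\<lambda>z. indicator Good z * (fstar (fst z) * ?g z))"
      by (rule intG, unfold mP, measurable) (rule absprod, erule fsG, rule d2, erule fG[OF hf], erule fG[OF fbar(1)])
    have Kf: "(\<integral>z. indicator Good z * snd z * (f (fst z) - fbar (fst z)) \<partial>P) = (\<integral>z. indicator Good z * fstar (fst z) * (f (fst z) - fbar (fst z)) \<partial>P)"
      by (rule K[of "\<lambda>x. f x - fbar x" "2*yinf"]) (use F_bdd hf fbar(1) in \<open>auto intro!: d2\<close>)
    have "EZ f = (\<integral>z. (indicator Good z * (?g z)^2 + 2 * (indicator Good z * (?g z * (fbar (fst z) - fstar (fst z)))))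
                 + (2 * (indicator Good z * (fstar (fst z) * ?g z)) - 2 * (indicator Good z * (snd z * ?g z))) \<partial>P)"
      unfolding EZ_def Z_def by (rule Bochner_Integration.integral_cong) (auto simp: power2_eq_square algebra_simps)
    also have "\<dots> = (Dd f + 2 * Aa f) + (2 * (\<integral>z. indicator Good z * (fstar (fst z) * ?g z) \<partial>P) - 2 * (\<integral>z. indicator Good z * (snd z * ?g z) \<partial>P))"
      using i1 i2 i3 i4 by (simp add: Dd_def Aa_def)
    also have "(\<integral>z. indicator Good z * (snd z * ?g z) \<partial>P) = (\<integral>z. indicator Good z * (fstar (fst z) * ?g z) \<partial>P)"
      using Kf by (simp add: mult.assoc)
    finally show ?thesis by simp
  qed
  have Ahat_eq: "A_hat Xi dtrain fbar fstar f = Aa f" if hf: "f \<in> F" for f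
  proof -
    note fm[measurable] = F_m[OF hf]
    show ?thesis unfolding A_hat_def setI Aa_def by (rule TG[symmetric]) measurable
  qed
  have Rtr_eq: "Rtr f = (LINT x:Xi|lborel. dtrain x * (f x - fstar x)^2)" if hf: "f \<in> F" for f
  proof -
    note fm[measurable] = F_m[OF hf]
    show ?thesis unfolding setI Rtr_def by (rule TG) measurable
  qed
  have Xi_ne: "Xi \<noteq> {}"
  proof
    assume "Xi = {}"
    thus False using dtrain by (simp add: prob_density_on_def)
  qed
  have ratio: "dtest x \<le> C_inf Xi dtrain dtest * dtrain x" if x: "x \<in> Xi" for x
  proof -
    have "\<bar>dtest x / dtrain x\<bar> \<le> C_inf Xi dtrain dtest"
      unfolding C_inf_def by (rule cSUP_upper[OF x C_fin])
    hence "dtest x / dtrain x \<le> C_inf Xi dtrain dtest" using abs_ge_self[of "dtest x / dtrain x"] by linarith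
    thus ?thesis using dtrain_pos x by (simp add: divide_le_eq mult.commute)
  qed
  have C0: "0 \<le> C_inf Xi dtrain dtest"
  proof -
    obtain x where x: "x \<in> Xi" using Xi_ne by blast
    have "\<bar>dtest x / dtrain x\<bar> \<le> C_inf Xi dtrain dtest"
      unfolding C_inf_def by (rule cSUP_upper[OF x C_fin])
    thus ?thesis by linarith
  qed
  have test_le: "test_risk Xi dtest fstar f \<le> C_inf Xi dtrain dtest * Rtr f" if hf: "f \<in> F" for f
  proof -
    note fm[measurable] = F_m[OF hf]
    have bd: "\<bar>(f x - fstar x)^2\<bar> \<le> (2*yinf)^2" if "x \<in> Xi" for x
      by (rule abssq, rule d2) (use F_bdd hf fstar_bdd that in auto)
    have "test_risk Xi dtest fstar f = (\<integral>x. indicator Xi x * dtest x * (f x - fstar x)^2 \<partial>lborel)"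
      unfolding test_risk_def set_lebesgue_integral_def by (simp add: mult.assoc)
    also have "\<dots> \<le> (\<integral>x. C_inf Xi dtrain dtest * (indicator Xi x * dtrain x * (f x - fstar x)^2) \<partial>lborel)"
    proof (rule integral_mono)
      show "integrable lborel (\<lambda>x. indicator Xi x * dtest x * (f x - fstar x)^2)"
        by (rule dens_integrable[OF Xi_b dtest _ bd]) measurable
      show "integrable lborel (\<lambda>x. C_inf Xi dtrain dtest * (indicator Xi x * dtrain x * (f x - fstar x)^2))"
        by (rule integrable_mult_right, rule dens_integrable[OF Xi_b dtrain _ bd]) measurable
      fix x show "indicator Xi x * dtest x * (f x - fstar x)^2 \<le> C_inf Xi dtrain dtest * (indicator Xi x * dtrain x * (f x - fstar x)^2)"
        using ratio[of x] by (cases "x \<in> Xi") (auto simp: mult.assoc[symmetric] intro!: mult_right_mono)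
    qed
    also have "\<dots> = C_inf Xi dtrain dtest * Rtr f"
      using Rtr_eq[OF hf] by (simp add: setI)
    finally show ?thesis .
  qed
  have Rtr_split: "Rtr f = Dd f + 2 * Aa f + Rtr fbar" if hf: "f \<in> F" for f
  proof -
    note fm[measurable] = F_m[OF hf]
    let ?g = "\<lambda>z. f (fst z) - fbar (fst z)"
    have i1: "integrable P (\<lambda>z. indicator Good z * (?g z)^2)"
      by (rule intG, unfold mP, measurable) (rule abssq, rule d2, erule fG[OF hf], erule fG[OF fbar(1)])
    have i2: "integrable P (\<lambda>z. indicator Good z * (?g z * (fbar (fst z) - fstar (fst z))))"
      by (rule intG, unfold mP, measurable) (rule absprod, (rule d2, erule fG[OF hf], erule fG[OF fbar(1)]), (rule d2, erule fG[OF fbar(1)], erule fsG))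
    have i3: "integrable P (\<lambda>z. indicator Good z * (fbar (fst z) - fstar (fst z))^2)"
      by (rule intG, unfold mP, measurable) (rule abssq, rule d2, erule fG[OF fbar(1)], erule fsG)
    have "Rtr f = (\<integral>z. indicator Good z * (?g z)^2 + 2 * (indicator Good z * (?g z * (fbar (fst z) - fstar (fst z))))
                  + indicator Good z * (fbar (fst z) - fstar (fst z))^2 \<partial>P)"
      unfolding Rtr_def by (rule Bochner_Integration.integral_cong) (auto simp: power2_eq_square algebra_simps)
    also have "\<dots> = Dd f + 2 * Aa f + Rtr fbar"
      using i1 i2 i3 by (simp add: Dd_def Aa_def Rtr_def)
    finally show ?thesis .
  qed
  have Rfbar: "Rtr fbar \<le> (B_inf Xi fbar fstar)^2"
  proof -
    have bdd: "bdd_above ((\<lambda>x. \<bar>fbar x - fstar x\<bar>) ` Xi)"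
      by (rule bdd_aboveI[of _ "2*yinf"]) (use F_bdd fbar(1) fstar_bdd in \<open>auto intro!: d2\<close>)
    have pt: "indicator Good z * (fbar (fst z) - fstar (fst z))^2 \<le> (B_inf Xi fbar fstar)^2" for z
    proof (cases "z \<in> Good")
      case True
      hence "\<bar>fbar (fst z) - fstar (fst z)\<bar> \<le> B_inf Xi fbar fstar"
        unfolding B_inf_def using GoodE by (intro cSUP_upper[OF _ bdd]) auto
      hence "\<bar>fbar (fst z) - fstar (fst z)\<bar>^2 \<le> (B_inf Xi fbar fstar)^2"
        by (intro power_mono) auto
      thus ?thesis using True by simp
    qed simp
    have "Rtr fbar \<le> (\<integral>z. (B_inf Xi fbar fstar)^2 \<partial>P)"
      unfolding Rtr_def
      by (rule integral_mono, rule intG, unfold mP, measurable, rule abssq, rule d2, erule fG[OF fbar(1)], erule fsG)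
         (use pt in auto)
    thus ?thesis by (simp add: P.prob_space)
  qed
  have Dd0: "0 \<le> Dd f" for f unfolding Dd_def by (rule Bochner_Integration.integral_nonneg) auto
  have Gm: "measure P Good = 1"
    using P.prob_Collect_eq_1[of "\<lambda>z. z \<in> Good"] AE_Good Good_P by (simp add: spP)
  have Gone: "(\<integral>z. indicator Good z \<partial>P) = (1::real)"
    using Gm Good_P by simp
  have igood: "integrable P (\<lambda>z. c * indicator Good z)" for c :: real
    by (rule intP[of _ "\<bar>c\<bar>"]) (use Good_P in \<open>auto simp: indicator_def\<close>)
  have Zb: "\<bar>Z f z\<bar> \<le> 4*yinf^2" if hf: "f \<in> F" and z: "z \<in> Good" for f z
  proof -
    have a: "\<bar>f (fst z) - snd z\<bar> \<le> 2*yinf" by (rule d2, rule fG[OF hf z], rule sG[OF z])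
    have b: "\<bar>fbar (fst z) - snd z\<bar> \<le> 2*yinf" by (rule d2, rule fG[OF fbar(1) z], rule sG[OF z])
    have a2: "(f (fst z) - snd z)^2 \<le> 4*yinf^2" using abssq[OF a] by (simp add: power_mult_distrib)
    have b2: "(fbar (fst z) - snd z)^2 \<le> 4*yinf^2" using abssq[OF b] by (simp add: power_mult_distrib)
    show ?thesis unfolding Z_def using a2 b2 by (simp add: abs_le_iff) (smt (verit) zero_le_power2)
  qed
  have Zm: "Z f \<in> borel_measurable P" if hf: "f \<in> F" for f
  proof -
    note fm[measurable] = F_m[OF hf]
    show ?thesis unfolding mP Z_def by measurable
  qed
  have intZ: "integrable P (\<lambda>z. indicator Good z * Z f z)" if hf: "f \<in> F" for f
    by (rule intG[OF Zm[OF hf] Zb[OF hf]])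
  have EZb: "\<bar>EZ f\<bar> \<le> 4*yinf^2" if hf: "f \<in> F" for f
  proof -
    have "\<bar>EZ f\<bar> \<le> (\<integral>z. \<bar>indicator Good z * Z f z\<bar> \<partial>P)"
      unfolding EZ_def by (rule integral_abs_bound)
    also have "\<dots> \<le> (\<integral>z. 4*yinf^2 \<partial>P)"
      by (rule integral_mono) (use intZ[OF hf] Zb[OF hf] in \<open>auto simp: indicator_def\<close>)
    finally show ?thesis by (simp add: P.prob_space)
  qed
  define W where "W = (\<lambda>f z. indicator Good z * (EZ f - Z f z))"
  define L where "L = ln (real (card F) / \<delta>)"
  define u where "u = L / real n"
  define t where "t = (\<lambda>f. sqrt (2*u*(16*yinf^2*Dd f)) + 2*(8*yinf^2)*u/3)"
  let ?Q = "PiM {..<n} (\<lambda>_. P)"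
  interpret PP: product_prob_space "\<lambda>_. P" "{..<n}" by unfold_locales
  have cardF: "1 \<le> card F" using F_fin F_ne by (simp add: Suc_le_eq card_gt_0_iff)
  have L0: "0 < L" unfolding L_def using cardF \<delta> by (intro ln_gt_zero) (simp add: less_divide_eq)
  have u0: "0 < u" unfolding u_def using L0 n_pos by simp
  have expL: "exp (- real n * u) = \<delta> / real (card F)"
    unfolding u_def L_def using n_pos cardF \<delta> by (simp add: exp_minus)
  define Bf where "Bf = (\<lambda>f. {S\<in>space ?Q. (\<Sum>i<n. W f (S i)) \<ge> real n * t f})"
  have Wm: "W f \<in> borel_measurable P" if hf: "f \<in> F" for f
    unfolding W_def using Zm[OF hf] Good_P by measurable
  have Bf_m: "Bf f \<in> sets ?Q" if hf: "f \<in> F" for f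
    unfolding Bf_def using Wm[OF hf] by measurable
  have bern: "measure ?Q (Bf f) \<le> \<delta> / real (card F)" if hf: "f \<in> F" for f
  proof -
    have Wb: "W f z \<le> 8*yinf^2" for z
      using EZb[OF hf] Zb[OF hf, of z] by (auto simp: W_def indicator_def abs_le_iff)
    have WK: "\<bar>W f z\<bar> \<le> 8*yinf^2" for z
      using EZb[OF hf] Zb[OF hf, of z] by (auto simp: W_def indicator_def abs_le_iff)
    have W0: "(\<integral>z. W f z \<partial>P) = 0"
    proof -
      have "(\<integral>z. W f z \<partial>P) = (\<integral>z. EZ f * indicator Good z - indicator Good z * Z f z \<partial>P)"
        unfolding W_def by (simp add: algebra_simps)
      also have "\<dots> = EZ f * (\<integral>z. indicator Good z \<partial>P) - EZ f"
        by (subst Bochner_Integration.integral_diff[OF igood intZ[OF hf]]) (simp add: EZ_def)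
      finally show ?thesis using Gone by simp
    qed
    have Wv: "(\<integral>z. (W f z)^2 \<partial>P) \<le> 16*yinf^2*Dd f"
    proof -
      note fm[measurable] = F_m[OF hf]
      have intZ2: "integrable P (\<lambda>z. indicator Good z * (Z f z)^2)"
        by (rule intG[of _ "(4*yinf^2)^2"]) (use Zm[OF hf] in measurable, rule abssq, rule Zb[OF hf])
      have "(\<integral>z. (W f z)^2 \<partial>P) = (\<integral>z. (EZ f)^2 * indicator Good z - 2 * EZ f * (indicator Good z * Z f z) + indicator Good z * (Z f z)^2 \<partial>P)"
        unfolding W_def by (rule Bochner_Integration.integral_cong) (auto simp: indicator_def power2_eq_square algebra_simps)
      also have "\<dots> = (EZ f)^2 * (\<integral>z. indicator Good z \<partial>P) - 2 * EZ f * EZ f + (\<integral>z. indicator Good z * (Z f z)^2 \<partial>P)"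
        by (subst Bochner_Integration.integral_add[OF Bochner_Integration.integrable_diff[OF igood integrable_mult_right[OF intZ[OF hf]]] intZ2],
            subst Bochner_Integration.integral_diff[OF igood integrable_mult_right[OF intZ[OF hf]]]) (simp add: EZ_def)
      also have "\<dots> = (\<integral>z. indicator Good z * (Z f z)^2 \<partial>P) - (EZ f)^2"
        using Gone Gm by (simp add: power2_eq_square)
      also have "\<dots> \<le> (\<integral>z. indicator Good z * (Z f z)^2 \<partial>P)" by simp
      also have "\<dots> \<le> (\<integral>z. 16*yinf^2 * (indicator Good z * (f (fst z) - fbar (fst z))^2) \<partial>P)"
      proof (rule integral_mono[OF intZ2])
        show "integrable P (\<lambda>z. 16*yinf^2 * (indicator Good z * (f (fst z) - fbar (fst z))^2))"
          by (rule integrable_mult_right, rule intG, unfold mP, measurable) (rule abssq, rule d2, erule fG[OF hf], erule fG[OF fbar(1)])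
        fix z
        show "indicator Good z * (Z f z)^2 \<le> 16*yinf^2 * (indicator Good z * (f (fst z) - fbar (fst z))^2)"
        proof (cases "z \<in> Good")
          case True
          have e: "Z f z = (f (fst z) - fbar (fst z)) * (f (fst z) + fbar (fst z) - 2 * snd z)"
            unfolding Z_def by (simp add: power2_eq_square algebra_simps)
          have "\<bar>f (fst z) + fbar (fst z) - 2 * snd z\<bar> \<le> 4*yinf"
            by (rule d4, rule fG[OF hf True], rule fG[OF fbar(1) True], rule sG[OF True])
          hence "(f (fst z) + fbar (fst z) - 2 * snd z)^2 \<le> (4*yinf)^2" using abssq by fastforce
          hence "(f (fst z) - fbar (fst z))^2 * (f (fst z) + fbar (fst z) - 2 * snd z)^2 \<le> (f (fst z) - fbar (fst z))^2 * (4*yinf)^2"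
            by (intro mult_left_mono) auto
          moreover have "(Z f z)^2 = (f (fst z) - fbar (fst z))^2 * (f (fst z) + fbar (fst z) - 2 * snd z)^2"
            unfolding e by (simp add: power_mult_distrib)
          ultimately have "(Z f z)^2 \<le> 16*yinf^2 * (f (fst z) - fbar (fst z))^2"
            by (simp add: power_mult_distrib mult.commute)
          thus ?thesis using True by simp
        qed simp
      qed
      also have "\<dots> = 16*yinf^2*Dd f" by (simp add: Dd_def)
      finally show ?thesis .
    qed
    have "measure ?Q (Bf f) \<le> exp (- real n * u)"
      unfolding Bf_def t_def
      by (rule bernstein_prod[OF P_prob Wm[OF hf] Wb WK W0 Wv]) (use Dd0 u0 yinf_pos in auto)
    thus ?thesis using expL by simp
  qed
  define Bg where "Bg = (\<lambda>i. {S\<in>space ?Q. S i \<notin> Good})"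
  have Bg_m: "Bg i \<in> sets ?Q" if "i < n" for i
  proof -
    have i: "i \<in> {..<n}" using that by simp
    have "{S\<in>space ?Q. S i \<notin> Good} = space ?Q - {S\<in>space ?Q. S i \<in> Good}" by auto
    also have "\<dots> \<in> sets ?Q" using measurable_component_singleton[OF i, of "\<lambda>_. P"] Good_P
      by (intro sets.Diff sets.top) (auto simp: measurable_def vimage_def Int_def conj_commute)
    finally show ?thesis unfolding Bg_def .
  qed
  have Bg0: "measure ?Q (Bg i) = 0" if i: "i < n" for i
  proof -
    have "Bg i = {S\<in>space ?Q. S i \<in> space P - Good}"
      unfolding Bg_def using i by (auto simp: space_PiM spP)
    hence "emeasure ?Q (Bg i) = emeasure P (space P - Good)"
      using PP.emeasure_PiM_Collect_single[of i "space P - Good"] i Good_P by auto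
    also have "\<dots> = 0"
      using P.prob_compl[OF Good_P] Gm by (simp add: P.emeasure_eq_measure)
    finally show ?thesis by (simp add: measure_def)
  qed
  define Bad where "Bad = (\<Union>i\<in>{..<n}. Bg i) \<union> (\<Union>f\<in>F. Bf f)"
  have Bad_m: "Bad \<in> sets ?Q" unfolding Bad_def using Bg_m Bf_m F_fin by auto
  have "measure ?Q Bad \<le> measure ?Q (\<Union>i\<in>{..<n}. Bg i) + measure ?Q (\<Union>f\<in>F. Bf f)"
    unfolding Bad_def by (rule measure_Un_le) (use Bg_m Bf_m F_fin in auto)
  also have "measure ?Q (\<Union>i\<in>{..<n}. Bg i) \<le> (\<Sum>i<n. measure ?Q (Bg i))"
    by (rule PP.finite_measure_subadditive_finite) (use Bg_m in auto)
  also have "(\<Sum>i<n. measure ?Q (Bg i)) = 0" using Bg0 by simp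
  also have "measure ?Q (\<Union>f\<in>F. Bf f) \<le> (\<Sum>f\<in>F. measure ?Q (Bf f))"
    by (rule PP.finite_measure_subadditive_finite) (use Bf_m F_fin in auto)
  also have "\<dots> \<le> (\<Sum>f\<in>F. \<delta> / real (card F))" by (rule sum_mono) (rule bern)
  also have "\<dots> = \<delta>" using cardF by simp
  finally have Bad_le: "measure ?Q Bad \<le> \<delta>" by simp
  define E where "E = space ?Q - Bad"
  have E_m: "E \<in> sets ?Q" unfolding E_def using Bad_m by auto
  have E_pr: "measure ?Q E \<ge> 1 - \<delta>"
    unfolding E_def using PP.prob_compl[OF Bad_m] Bad_le by simp
  show ?thesis
  proof (intro bexI[OF _ E_m] conjI E_pr ballI impI)
    fix S fh assume S: "S \<in> E" and hfh: "fh \<in> F" and erm: "\<forall>f\<in>F. emp_risk n S fh \<le> emp_risk n S f"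
    have SG: "S i \<in> Good" if "i < n" for i using S that unfolding E_def Bad_def Bg_def by auto
    have SB: "\<not> (\<Sum>i<n. W fh (S i)) \<ge> real n * t fh" using S hfh unfolding E_def Bad_def Bf_def by auto
    have "emp_risk n S fh \<le> emp_risk n S fbar" using erm fbar(1) by auto
    hence "(\<Sum>i<n. (fh (fst (S i)) - snd (S i))^2) \<le> (\<Sum>i<n. (fbar (fst (S i)) - snd (S i))^2)"
      unfolding emp_risk_def using n_pos by (simp add: divide_le_cancel)
    hence sz: "(\<Sum>i<n. Z fh (S i)) \<le> 0" unfolding Z_def by (simp add: sum_subtractf)
    have "(\<Sum>i<n. W fh (S i)) = (\<Sum>i<n. EZ fh - Z fh (S i))"
      by (rule sum.cong) (auto simp: W_def SG)
    also have "\<dots> = real n * EZ fh - (\<Sum>i<n. Z fh (S i))" by (simp add: sum_subtractf)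
    finally have "real n * EZ fh < real n * t fh" using SB sz by linarith
    hence EZt: "EZ fh < t fh" using n_pos by simp
    define a where "a = yinf^2 * u"
    have a0: "0 < a" unfolding a_def using yinf_pos u0 by simp
    define D where "D = Dd fh"
    define A where "A = Aa fh"
    have tq: "t fh = sqrt (32 * a * D) + 16*a/3"
      unfolding t_def a_def D_def by (simp add: algebra_simps)
    have main: "D + 2*A < sqrt (32 * a * D) + 16*a/3"
      using EZt EZ_eq[OF hfh] tq by (simp add: D_def A_def)
    have D0: "0 \<le> D" unfolding D_def by (rule Dd0)
    have tr: "test_risk Xi dtest fstar fh \<le> C_inf Xi dtrain dtest * (D + 2*A + (B_inf Xi fbar fstar)^2)"
    proof -
      have "test_risk Xi dtest fstar fh \<le> C_inf Xi dtrain dtest * Rtr fh" by (rule test_le[OF hfh])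
      also have "\<dots> \<le> C_inf Xi dtrain dtest * (D + 2*A + (B_inf Xi fbar fstar)^2)"
        using Rtr_split[OF hfh] Rfbar C0 by (intro mult_left_mono) (auto simp: D_def A_def)
      finally show ?thesis .
    qed
    have Ahat: "A_hat Xi dtrain fbar fstar fh = A" unfolding A_def by (rule Ahat_eq[OF hfh])
    have a224: "224 * yinf^2 * ln (real (card F) / \<delta>) / (3 * real n) = 224*a/3"
      unfolding a_def u_def L_def by simp
    have a128: "128 * yinf^2 * ln (real (card F) / \<delta>) / (3 * real n) = 128*a/3"
      unfolding a_def u_def L_def by simp
    show "test_risk Xi dtest fstar fh \<le> C_inf Xi dtrain dtest *
          (if A_hat Xi dtrain fbar fstar fh < 0
           then (B_inf Xi fbar fstar)^2 + 224 * yinf^2 * ln (real (card F) / \<delta>) / (3 * real n)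
                - 2 * A_hat Xi dtrain fbar fstar fh
           else (B_inf Xi fbar fstar)^2 + 128 * yinf^2 * ln (real (card F) / \<delta>) / (3 * real n)
                - sqrt 3 * A_hat Xi dtrain fbar fstar fh)"
    proof (cases "A < 0")
      case True
      have "D + 4*A \<le> 224*a/3" by (rule alg_neg[OF a0 D0 refl main])
      hence "D + 2*A + (B_inf Xi fbar fstar)^2 \<le> (B_inf Xi fbar fstar)^2 + 224*a/3 - 2*A" by simp
      hence "C_inf Xi dtrain dtest * (D + 2*A + (B_inf Xi fbar fstar)^2) \<le> C_inf Xi dtrain dtest * ((B_inf Xi fbar fstar)^2 + 224*a/3 - 2*A)"
        using C0 by (intro mult_left_mono)
      thus ?thesis using tr True unfolding Ahat a224 by simp
    next
      case False
      have "D + (2 + sqrt 3)*A \<le> 128*a/3" by (rule alg_pos[OF a0 D0 _ _ _ refl main]) (use False in auto)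
      hence "D + 2*A + (B_inf Xi fbar fstar)^2 \<le> (B_inf Xi fbar fstar)^2 + 128*a/3 - sqrt 3 * A" by (simp add: algebra_simps)
      hence "C_inf Xi dtrain dtest * (D + 2*A + (B_inf Xi fbar fstar)^2) \<le> C_inf Xi dtrain dtest * ((B_inf Xi fbar fstar)^2 + 128*a/3 - sqrt 3 * A)"
        using C0 by (intro mult_left_mono)
      thus ?thesis using tr False unfolding Ahat a128 by simp
    qed
  qed
qed

end
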